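(* Let $T$ be a finite rooted tree with root $P$ and exactly $n \ge 1$ non-root nodes, and set $k^* = \lfloor (n-1)/2 \rfloor$. Then $$\mathrm{IDI}(T) \le (1 + k^* )(n - k^* ).$$ This bound is attained by the following tree. Take a path $P \to p_1 \to \dots \to p_{k^*}$. Then attach $n - k^*$ leaves as children of $p_{k^*}$, or as children of $P$ if $k^* = 0$. More generally, for $0 \le k \le n-1$, let $T_k$ be the tree consisting of a path $P \to p_1 \to \dots \to p_k$ together with $n-k$ leaves attached as children of the last path node ($p_k$, or $P$ if $k=0$). Then $\mathrm{IDI}(T_k) = k(n-k) + (n-k) = (k+1)(n-k)$, and $k^*$ maximizes $(k+1)(n-k)$ over integers $0 \le k \le n-1$.
   Context: For a finite rooted tree $T$ with root $P$, a leaf is a node with no children. The Influence Dispersion Index is $\mathrm{IDI}(T) = \sum_{\ell \in L(T)} \mathrm{dist}(P,\ell)$, where $L(T)$ is the set of leaves of $T$ and $\mathrm{dist}(P,\ell)$ is the number of edges on the path from $P$ to $\ell$. The paper writes the maximizer as $k = \lfloor (n-1)/2 \rceil$, meaning $(n-1)/2$ rounded to an integer. Either rounding gives the same value of $(1+k)(n-k)$. *)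

theory Defs
  imports Main
begin

text \<open>A finite rooted tree is represented by a finite vertex set V, a root r \<in> V,
and a parent function par: every non-root vertex v has parent par v \<in> V, and
iterating par from any vertex eventually reaches the root (so the edge set
{(v, par v) | v \<in> V - {r}} forms a tree; the value par r is irrelevant).\<close>

definition rooted_tree :: "'a set \<Rightarrow> 'a \<Rightarrow> ('a \<Rightarrow> 'a) \<Rightarrow> bool" where
  "rooted_tree V r par \<longleftrightarrow>
     finite V \<and> r \<in> V \<and> (\<forall>v \<in> V - {r}. par v \<in> V) \<and>
     (\<forall>v \<in> V. \<exists>k. (par ^^ k) v = r)"

definition depth :: "'a \<Rightarrow> ('a \<Rightarrow> 'a) \<Rightarrow> 'a \<Rightarrow> nat" where
  "depth r par v = (LEAST k. (par ^^ k) v = r)"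

definition children :: "'a set \<Rightarrow> 'a \<Rightarrow> ('a \<Rightarrow> 'a) \<Rightarrow> 'a \<Rightarrow> 'a set" where
  "children V r par v = {w \<in> V - {r}. par w = v}"

definition leaves :: "'a set \<Rightarrow> 'a \<Rightarrow> ('a \<Rightarrow> 'a) \<Rightarrow> 'a set" where
  "leaves V r par = {v \<in> V. children V r par v = {}}"

definition IDI :: "'a set \<Rightarrow> 'a \<Rightarrow> ('a \<Rightarrow> 'a) \<Rightarrow> nat" where
  "IDI V r par = (\<Sum>l \<in> leaves V r par. depth r par l)"

text \<open>The tree T_k on vertices {0..n}: root 0, path 0 -> 1 -> ... -> k, and
leaves k+1, ..., n all attached to k (to the root 0 if k = 0).\<close>
definition Tk_par :: "nat \<Rightarrow> nat \<Rightarrow> nat \<Rightarrow> nat" where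
  "Tk_par n k v = (if v \<le> k then v - 1 else k)"

end

theory Submission
  imports Defs
begin

lemma quad_bound:
  fixes n k :: nat
  assumes "k \<le> n - 1" "n \<ge> 1"
  shows "(k + 1) * (n - k) \<le> ((n - 1) div 2 + 1) * (n - (n - 1) div 2)"
proof -
  define h where "h = (n - 1) div 2"
  have hn: "n = 2*h+1 \<or> n = 2*h+2" using assms unfolding h_def by presburger
  have kn: "k < n" using assms by simp
  have hle: "h < n" using hn by auto
  have "int ((k + 1) * (n - k)) \<le> int ((h + 1) * (n - h))"
  proof -
    have e1: "int ((k + 1) * (n - k)) = (int k + 1) * (int n - int k)" using kn by (simp only: of_nat_mult of_nat_diff[OF less_imp_le[OF kn]] of_nat_add of_nat_1)
    have e2: "int ((h + 1) * (n - h)) = (int h + 1) * (int n - int h)" using hle by (simp only: of_nat_mult of_nat_diff[OF less_imp_le[OF hle]] of_nat_add of_nat_1)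
    have sq: "0 \<le> (int h - int k)^2" by simp
    have sq2: "0 \<le> (int h - int k) * (int h - int k + 1)"
    proof (cases "int h - int k \<ge> 0")
      case True then show ?thesis by simp
    next
      case False then show ?thesis by (intro mult_nonpos_nonpos) auto
    qed
    have "int n = 2*int h+1 \<or> int n = 2*int h+2" using hn by auto
    then have "(int k + 1) * (int n - int k) \<le> (int h + 1) * (int n - int h)"
    proof
      assume N: "int n = 2*int h+1"
      have "(int h + 1) * (int n - int h) - (int k + 1) * (int n - int k) = (int h - int k)^2"
        unfolding N by (simp add: power2_eq_square algebra_simps)
      then show ?thesis using sq by linarith
    next
      assume N: "int n = 2*int h+2"
      have "(int h + 1) * (int n - int h) - (int k + 1) * (int n - int k) = (int h - int k) * (int h - int k + 1)"
        unfolding N by (simp add: algebra_simps)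
      then show ?thesis using sq2 by linarith
    qed
    then show ?thesis unfolding e1 e2 .
  qed
  then show ?thesis unfolding h_def by (simp only: of_nat_le_iff)
qed

lemma Tk_iter_low: "v \<le> k \<Longrightarrow> (Tk_par n k ^^ j) v = v - j"
  by (induction j) (auto simp: Tk_par_def)

lemma Tk_iter_high: "v > k \<Longrightarrow> (Tk_par n k ^^ Suc j) v = k - j"
proof (induction j)
  case 0 then show ?case by (simp add: Tk_par_def)
next
  case (Suc j)
  have "(Tk_par n k ^^ Suc (Suc j)) v = Tk_par n k ((Tk_par n k ^^ Suc j) v)" by simp
  also have "\<dots> = Tk_par n k (k - j)" using Suc.IH[OF Suc.prems] by (simp only:)
  also have "\<dots> = k - Suc j" by (simp add: Tk_par_def)
  finally show ?case .
qed

lemma Tk_depth_low: "v \<le> k \<Longrightarrow> depth 0 (Tk_par n k) v = v"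
  unfolding depth_def Tk_iter_low
  by (rule Least_equality) auto

lemma Tk_depth_high: assumes "v > k" shows "depth 0 (Tk_par n k) v = Suc k"
  unfolding depth_def
proof (rule Least_equality)
  show "(Tk_par n k ^^ Suc k) v = 0" using Tk_iter_high[OF assms, of k] by simp
next
  fix y assume y: "(Tk_par n k ^^ y) v = 0"
  show "Suc k \<le> y"
  proof (cases y)
    case 0 then show ?thesis using y assms by simp
  next
    case (Suc j) then show ?thesis using y Tk_iter_high[OF assms, of j] by simp
  qed
qed

lemma Tk_tree: assumes "k \<le> n - 1" "n \<ge> 1" shows "rooted_tree {0..n} 0 (Tk_par n k)"
  unfolding rooted_tree_def
proof (intro conjI ballI)
  fix v assume "v \<in> {0..n} - {0}" then show "Tk_par n k v \<in> {0..n}"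
    using assms by (auto simp: Tk_par_def)
next
  fix v assume "v \<in> {0..(n::nat)}"
  show "\<exists>j. (Tk_par n k ^^ j) v = 0"
  proof (cases "v \<le> k")
    case True then show ?thesis using Tk_iter_low[OF True, of v n] by auto
  next
    case False then show ?thesis using Tk_iter_high[where v=v and k=k and n=n and j=k] by (intro exI[of _ "Suc k"]) simp
  qed
qed auto

lemma Tk_leaves: assumes "k \<le> n - 1" "n \<ge> 1" shows "leaves {0..n} 0 (Tk_par n k) = {k+1..n}"
proof -
  have "children {0..n} 0 (Tk_par n k) v = {} \<longleftrightarrow> k < v" if "v \<le> n" for v
  proof
    assume c: "children {0..n} 0 (Tk_par n k) v = {}"
    show "k < v"
    proof (rule ccontr)
      assume "\<not> k < v"
      then have "v + 1 \<in> children {0..n} 0 (Tk_par n k) v"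
        using assms by (auto simp: children_def Tk_par_def)
      then show False using c by simp
    qed
  next
    assume "k < v"
    then show "children {0..n} 0 (Tk_par n k) v = {}"
      unfolding children_def Tk_par_def by (auto split: if_splits)
  qed
  note H = this
  show ?thesis
  proof (rule set_eqI)
    fix v
    show "v \<in> leaves {0..n} 0 (Tk_par n k) \<longleftrightarrow> v \<in> {k+1..n}"
    proof (cases "v \<le> n")
      case True then show ?thesis unfolding leaves_def using H[OF True] by auto
    next
      case False then show ?thesis unfolding leaves_def by auto
    qed
  qed
qed

lemma Tk_IDI: assumes "k \<le> n - 1" "n \<ge> 1" shows "IDI {0..n} 0 (Tk_par n k) = k * (n - k) + (n - k)"
proof -
  have "IDI {0..n} 0 (Tk_par n k) = (\<Sum>l\<in>{k+1..n}. Suc k)"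
    unfolding IDI_def Tk_leaves[OF assms] by (rule sum.cong) (auto simp: Tk_depth_high)
  then show ?thesis by simp
qed

lemma depth_root: "depth r par r = 0"
  unfolding depth_def by (rule Least_equality) auto

lemma depth_ex: assumes "rooted_tree V r par" "v \<in> V" shows "(par ^^ depth r par v) v = r"
proof -
  obtain j where "(par ^^ j) v = r" using assms unfolding rooted_tree_def by blast
  then show ?thesis unfolding depth_def by (rule LeastI)
qed

lemma depth_par: assumes T: "rooted_tree V r par" and v: "v \<in> V" "v \<noteq> r"
  shows "depth r par v = Suc (depth r par (par v))"
proof -
  define d where "d = depth r par v"
  have dv: "(par ^^ d) v = r" using depth_ex[OF T v(1)] d_def by simp
  have "d \<noteq> 0"
  proof
    assume "d = 0" then show False using dv v(2) by simp
  qed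
  then obtain d' where dd: "d = Suc d'" by (cases d) auto
  have p: "(par ^^ d') (par v) = r" using dv dd by (simp add: funpow_Suc_right del: funpow.simps)
  have le: "depth r par (par v) \<le> d'" unfolding depth_def using p by (rule Least_le)
  have "d \<le> Suc (depth r par (par v))"
  proof -
    have pv: "par v \<in> V" using T v unfolding rooted_tree_def by blast
    have "(par ^^ Suc (depth r par (par v))) v = r"
      using depth_ex[OF T pv] by (simp add: funpow_Suc_right del: funpow.simps)
    then show ?thesis unfolding d_def depth_def by (rule Least_le)
  qed
  then show ?thesis using le dd d_def by simp
qed

lemma path_nodes: assumes T: "rooted_tree V r par" and l: "l \<in> V" "l \<noteq> r"
  shows "i < depth r par l \<Longrightarrow> (par ^^ i) l \<in> V - {r} \<and> depth r par ((par ^^ i) l) = depth r par l - i"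
proof (induction i)
  case 0 then show ?case using l by simp
next
  case (Suc i)
  then have IH: "(par ^^ i) l \<in> V - {r}" "depth r par ((par ^^ i) l) = depth r par l - i" by auto
  have pin: "(par ^^ Suc i) l \<in> V" using IH(1) T unfolding rooted_tree_def by auto
  have dd: "depth r par ((par ^^ i) l) = Suc (depth r par ((par ^^ Suc i) l))"
    using depth_par[OF T, of "(par ^^ i) l"] IH(1) by simp
  then have d2: "depth r par ((par ^^ Suc i) l) = depth r par l - Suc i" using IH(2) by simp
  then have "(par ^^ Suc i) l \<noteq> r" using Suc.prems depth_root[of r par] by auto
  then show ?case using pin d2 by simp
qed

lemma general_bound:
  assumes T: "rooted_tree V r par" and n: "card (V - {r}) = n" "n \<ge> 1"
  shows "IDI V r par \<le> (1 + (n - 1) div 2) * (n - (n - 1) div 2)"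
proof -
  define L where "L = leaves V r par - {r}"
  have fin: "finite V" using T unfolding rooted_tree_def by auto
  have LV: "L \<subseteq> V - {r}" unfolding L_def leaves_def by auto
  have finL: "finite L" using LV fin by (meson finite_Diff finite_subset)
  have IDIL: "IDI V r par = (\<Sum>l\<in>L. depth r par l)"
  proof (cases "r \<in> leaves V r par")
    case True
    have eq: "leaves V r par = insert r L" using True unfolding L_def by auto
    have "IDI V r par = sum (depth r par) (insert r L)" by (simp add: IDI_def eq)
    also have "\<dots> = depth r par r + sum (depth r par) L"
      using finL by (rule sum.insert) (simp add: L_def)
    finally show ?thesis by (simp add: depth_root)
  next
    case False then show ?thesis unfolding IDI_def L_def by simp
  qed
  show ?thesis
  proof (cases "L = {}")
    case True then show ?thesis using IDIL by simp
  next
    case False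
    define D where "D = Max (depth r par ` L)"
    obtain l where lL: "l \<in> L" and lD: "depth r par l = D"
      using False finL unfolding D_def by (metis Max_in empty_is_image finite_imageI imageE)
    have lV: "l \<in> V" "l \<noteq> r" using lL LV by auto
    have D1: "D \<ge> 1" using depth_par[OF T lV] lD by simp
    define u where "u = (\<lambda>i. (par ^^ i) l)"
    have uprop: "\<And>i. i < D \<Longrightarrow> u i \<in> V - {r} \<and> depth r par (u i) = D - i"
      using path_nodes[OF T lV] lD unfolding u_def by auto
    have inj: "inj_on u {1..<D}"
    proof (rule inj_onI)
      fix i j assume "i \<in> {1..<D}" "j \<in> {1..<D}" "u i = u j"
      then show "i = j" using uprop[of i] uprop[of j] by auto
    qed
    have usub: "u ` {1..<D} \<subseteq> (V - {r}) - L"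
    proof
      fix x assume "x \<in> u ` {1..<D}"
      then obtain i where i: "i \<in> {1..<D}" "x = u i" by auto
      obtain i' where i': "i = Suc i'" using i by (cases i) auto
      have a: "u i' \<in> V - {r}" using uprop[of i'] i i' by auto
      have "par (u i') = u i" unfolding u_def i' by simp
      then have "u i' \<in> children V r par (u i)" using a unfolding children_def by auto
      then have "u i \<notin> L" unfolding L_def leaves_def by auto
      then show "x \<in> (V - {r}) - L" using uprop[of i] i by auto
    qed
    have "card (u ` {1..<D}) + card L \<le> n"
    proof -
      have "card (u ` {1..<D} \<union> L) \<le> card (V - {r})"
        using usub LV fin by (intro card_mono) auto
      moreover have "card (u ` {1..<D} \<union> L) = card (u ` {1..<D}) + card L"
        using usub finL by (intro card_Un_disjoint) auto
      ultimately show ?thesis using n by simp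
    qed
    then have cardL: "card L + (D - 1) \<le> n" using card_image[OF inj] by simp
    have "IDI V r par \<le> card L * D"
    proof -
      have "\<And>i. i \<in> L \<Longrightarrow> depth r par i \<le> D" unfolding D_def using finL by simp
      then show ?thesis unfolding IDIL using sum_bounded_above[of L "depth r par" D] by simp
    qed
    also have "\<dots> \<le> (n - (D - 1)) * D"
    proof -
      have "card L \<le> n - (D - 1)" using cardL by linarith
      then show ?thesis by (rule mult_right_mono) simp
    qed
    also have "\<dots> = ((D - 1) + 1) * (n - (D - 1))" using D1 by simp
    also have "\<dots> \<le> ((n - 1) div 2 + 1) * (n - (n - 1) div 2)"
    proof -
      have "card L > 0" using False finL by (simp add: card_gt_0_iff)
      then have "D - 1 \<le> n - 1" using cardL by linarith
      then show ?thesis by (rule quad_bound) (rule n(2))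
    qed
    finally show ?thesis by (simp only: add.commute)
  qed
qed

theorem mainTheorem5:
  shows "(\<forall>(V :: 'a set) r par n. rooted_tree V r par \<and> card (V - {r}) = n \<and> n \<ge> 1 \<longrightarrow>
            IDI V r par \<le> (1 + (n - 1) div 2) * (n - (n - 1) div 2))
       \<and> (\<forall>n :: nat. n \<ge> 1 \<longrightarrow>
            rooted_tree {0..n} 0 (Tk_par n ((n - 1) div 2)) \<and>
            IDI {0..n} 0 (Tk_par n ((n - 1) div 2)) = (1 + (n - 1) div 2) * (n - (n - 1) div 2))
       \<and> (\<forall>n k :: nat. n \<ge> 1 \<and> k \<le> n - 1 \<longrightarrow>
            rooted_tree {0..n} 0 (Tk_par n k) \<and>
            IDI {0..n} 0 (Tk_par n k) = k * (n - k) + (n - k) \<and>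
            k * (n - k) + (n - k) = (k + 1) * (n - k))
       \<and> (\<forall>n k :: nat. n \<ge> 1 \<and> k \<le> n - 1 \<longrightarrow>
            (k + 1) * (n - k) \<le> ((n - 1) div 2 + 1) * (n - (n - 1) div 2))"
proof (intro conjI allI impI; (elim conjE)?)
  fix V :: "'a set" and r par n
  assume "rooted_tree V r par" "card (V - {r}) = n" "n \<ge> 1"
  then show "IDI V r par \<le> (1 + (n - 1) div 2) * (n - (n - 1) div 2)" by (rule general_bound)
next
  fix n :: nat assume n: "n \<ge> 1"
  have h: "(n - 1) div 2 \<le> n - 1" by simp
  show "rooted_tree {0..n} 0 (Tk_par n ((n - 1) div 2))" using Tk_tree[OF h n] .
  show "IDI {0..n} 0 (Tk_par n ((n - 1) div 2)) = (1 + (n - 1) div 2) * (n - (n - 1) div 2)"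
  proof -
    define m where "m = (n - 1) div 2"
    have "m * (n - m) + (n - m) = (1 + m) * (n - m)" by simp
    then show ?thesis using Tk_IDI[OF h n] unfolding m_def by presburger
  qed
next
  fix n k :: nat assume "n \<ge> 1" "k \<le> n - 1"
  then show "rooted_tree {0..n} 0 (Tk_par n k)" "IDI {0..n} 0 (Tk_par n k) = k * (n - k) + (n - k)"
    "k * (n - k) + (n - k) = (k + 1) * (n - k)"
    using Tk_tree Tk_IDI by auto
next
  fix n k :: nat assume "n \<ge> 1" "k \<le> n - 1"
  then show "(k + 1) * (n - k) \<le> ((n - 1) div 2 + 1) * (n - (n - 1) div 2)"
    using quad_bound by auto
qed

end
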